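(* Assume the setting below with $\mu_+(\infty)\le1$ and $\mu_-(\infty)<\infty$, and (A1), (A4), (A5), (A6). Let $0<\mu_0\le\mu_1<\infty$ be constants with $\mu_0\le f'(\rho)\le\mu_1$ and $\mu_0\rho\le f(\rho)\le\mu_1\rho$ for all $\rho\ge0$. Let $r$ be a regular equilibrium solution with $r(1)=\lambda>0$. Then $$\eta_0\tau(\rho)\le r'(\rho)\le\eta_1\tau(\rho)\qquad\text{for all }\rho\in(0,1],$$ where $\eta_0=\min\{\mu_0/\mu_1,\ q_0^{-1}(\mu_1/\mu_0)\}$ and $\eta_1=\max\{\mu_1/\mu_0,\ q_1^{-1}(\mu_0/\mu_1)\}$.
   Context: Setting: $n\ge2$; $\kappa$ continuous on $[0,\infty)$, $\kappa_\pm=\max\{\pm\kappa,0\}$, $\mu_\pm(\lambda)=\int_0^\lambda s\kappa_\pm(s)ds$ (and $\mu_\pm(\infty)$ the corresponding integrals over $[0,\infty)$); $f$ solves $f''+\kappa f=0$, $f(0)=0$, $f'(0)=1$. $\Phi(v_1,\dots,v_n)=\sum_i\phi(v_i)+h(v_1\cdots v_n)$, $\tau(\rho)=f(r(\rho))/f(\rho)$. An equilibrium solution with $r(1)=\lambda$ is $r\in C^1(0,1]$, twice differentiable on $(0,1)$, $r'>0$ on $(0,1]$, $r(0):=\lim_{\rho\to0^+}r(\rho)\ge0$, $r(1)=\lambda$, satisfying on $(0,1)$ $$f(\rho)\big[\phi''(r')+h''(r'\tau^{n-1})\tau^{2(n-1)}\big]r''=(n-1)\big[f'(r)\phi'(\tau)-f'(\rho)\phi'(r')\big]-(n-1)\big(f'(r)r'-f'(\rho)\tau\big)h''(r'\tau^{n-1})\,r'\tau^{2n-3};$$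 regular means $r(0)=0$. (A1) $h$ is $C^2$ and strictly convex. (A4) $\phi:(0,\infty)\to(0,\infty)$ is $C^2$ and convex. (A5) $v\phi'(v)$ is increasing. (A6) there is $t_0\ge0$ with $\phi'(t_0)=0$; $q_1(s)=\sup_{v>t_0}\phi'(v)/\phi'(sv)$ ($s\ge1$), $q_0(s)=\inf_{v>t_0/s}\phi'(v)/\phi'(sv)$ ($s\in(0,1]$) satisfy $q_1\in C^1[1,\infty)$, $q_0\in C^1(0,1]$, $q_1(s)\to0$ as $s\to\infty$, $q_0(s)\to\infty$ as $s\to0^+$, $q_1'<0$, $q_0'<0$. *)

theory Defs
  imports "HOL-Analysis.Analysis"
begin

definition strictly_convex_on :: "real set \<Rightarrow> (real \<Rightarrow> real) \<Rightarrow> bool" where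
  "strictly_convex_on S g \<longleftrightarrow> convex S \<and>
     (\<forall>x\<in>S. \<forall>y\<in>S. x \<noteq> y \<longrightarrow> (\<forall>t. 0 < t \<and> t < 1 \<longrightarrow>
        g ((1 - t) * x + t * y) < (1 - t) * g x + t * g y))"

definition kappa_pos :: "(real \<Rightarrow> real) \<Rightarrow> real \<Rightarrow> real" where
  "kappa_pos \<kappa> s = max (\<kappa> s) 0"

definition kappa_neg :: "(real \<Rightarrow> real) \<Rightarrow> real \<Rightarrow> real" where
  "kappa_neg \<kappa> s = max (- \<kappa> s) 0"

definition mu_pos_inf :: "(real \<Rightarrow> real) \<Rightarrow> ennreal" where
  "mu_pos_inf \<kappa> = (\<integral>\<^sup>+ s. ennreal (s * kappa_pos \<kappa> s) * indicator {0..} s \<partial>lborel)"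

definition mu_neg_inf :: "(real \<Rightarrow> real) \<Rightarrow> ennreal" where
  "mu_neg_inf \<kappa> = (\<integral>\<^sup>+ s. ennreal (s * kappa_neg \<kappa> s) * indicator {0..} s \<partial>lborel)"

definition q1_fun :: "(real \<Rightarrow> real) \<Rightarrow> real \<Rightarrow> real \<Rightarrow> real" where
  "q1_fun dphi t0 s = (SUP v\<in>{t0<..}. dphi v / dphi (s * v))"

definition q0_fun :: "(real \<Rightarrow> real) \<Rightarrow> real \<Rightarrow> real \<Rightarrow> real" where
  "q0_fun dphi t0 s = (INF v\<in>{t0 / s<..}. dphi v / dphi (s * v))"

definition tau_fun :: "(real \<Rightarrow> real) \<Rightarrow> (real \<Rightarrow> real) \<Rightarrow> real \<Rightarrow> real" where
  "tau_fun f r \<rho> = f (r \<rho>) / f \<rho>"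

end

theory Submission
  imports Defs
begin


lemma conv_deriv_mono:
  fixes g g' :: "real \<Rightarrow> real"
  assumes cv: "convex_on {0<..} g" and d: "\<And>x. x > 0 \<Longrightarrow> (g has_real_derivative g' x) (at x)"
    and xy: "0 < x" "x \<le> y"
  shows "g' x \<le> g' y"
proof (cases "x = y")
  case False
  then have xy': "x < y" using xy by simp
  have c: "connected {0::real<..}" by (simp add: connected_Ioi)
  have i: "\<And>z. z > 0 \<Longrightarrow> z \<in> interior {0::real<..}" by (simp add: interior_open)
  have w: "\<And>z. z > 0 \<Longrightarrow> (g has_field_derivative g' z) (at z within {0<..})"
    using d has_field_derivative_at_within by blast
  have tang: "\<And>a b. a > 0 \<Longrightarrow> b > 0 \<Longrightarrow> g b - g a \<ge> g' a * (b - a)"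
    by (rule convex_on_imp_above_tangent[OF cv c]) (auto intro: i w)
  have 1: "g y - g x \<ge> g' x * (y - x)"
    using tang xy by auto
  have 2: "g x - g y \<ge> g' y * (x - y)"
    using tang xy by auto
  have "g' x * (y - x) \<le> g' y * (y - x)" using 1 2 by (simp add: algebra_simps)
  then show ?thesis using xy' by simp
qed simp

lemma deriv_nonneg_of_mono:
  fixes g' :: "real \<Rightarrow> real"
  assumes m: "\<And>x y. 0 < x \<Longrightarrow> x \<le> y \<Longrightarrow> g' x \<le> g' y" and x: "0 < x"
    and d: "(g' has_real_derivative d) (at x)"
  shows "d \<ge> 0"
proof (rule ccontr)
  assume "\<not> d \<ge> 0"
  then obtain e where e: "e > 0" "\<And>h. h > 0 \<Longrightarrow> h < e \<Longrightarrow> g' x > g' (x + h)"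
    using DERIV_neg_dec_right[OF d] by force
  have "g' x > g' (x + e/2)" using e by simp
  moreover have "g' x \<le> g' (x + e/2)" using m x e by simp
  ultimately show False by simp
qed

lemma sconv_deriv_strict:
  fixes g g' :: "real \<Rightarrow> real"
  assumes scv: "strictly_convex_on {0<..} g" and d: "\<And>x. x > 0 \<Longrightarrow> (g has_real_derivative g' x) (at x)"
    and xy: "0 < x" "x < y"
  shows "g' x < g' y"
proof -
  have cv: "convex_on {0<..} g"
  proof (rule convex_on_linorderI)
    fix t x y :: real assume "t > 0" "t < 1" "x \<in> {0<..}" "y \<in> {0<..}" "x < y"
    then show "g ((1 - t) *\<^sub>R x + t *\<^sub>R y) \<le> (1 - t) * g x + t * g y"
      using scv unfolding strictly_convex_on_def by (simp add: less_imp_le)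
  qed simp
  have c: "connected {0::real<..}" by (simp add: connected_Ioi)
  have i: "\<And>z. z > 0 \<Longrightarrow> z \<in> interior {0::real<..}" by (simp add: interior_open)
  have w: "\<And>z. z > 0 \<Longrightarrow> (g has_field_derivative g' z) (at z within {0<..})"
    using d has_field_derivative_at_within by blast
  have tang: "\<And>a b. a > 0 \<Longrightarrow> b > 0 \<Longrightarrow> g b - g a \<ge> g' a * (b - a)"
    by (rule convex_on_imp_above_tangent[OF cv c]) (auto intro: i w)
  have le: "g' x \<le> g' y" using conv_deriv_mono[OF cv d] xy by simp
  show ?thesis
  proof (rule ccontr)
    assume "\<not> ?thesis"
    then have eq: "g' x = g' y" using le by simp
    have 1: "g y - g x \<ge> g' x * (y - x)"
      using tang xy by auto
    have 2: "g x - g y \<ge> g' y * (x - y)"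
      using tang xy by auto
    define m where "m = x/2 + y/2"
    have m0: "m > 0" using xy by (simp add: m_def)
    have mm: "m = (1 - 1/2) * x + (1/2) * y" by (simp add: m_def)
    have 3: "g m - g x \<ge> g' x * (m - x)"
      using tang[of x m] xy m0 by simp
    have 4: "g m < (1 - 1/2) * g x + (1/2) * g y"
    proof -
      have "\<forall>t. 0 < t \<and> t < 1 \<longrightarrow> g ((1 - t) * x + t * y) < (1 - t) * g x + t * g y"
        using scv xy unfolding strictly_convex_on_def by auto
      from spec[OF this, of "1/2"] show ?thesis unfolding mm by simp
    qed
    show False using 1 2 3 4 eq unfolding m_def by (simp add: algebra_simps)
  qed
qed


theorem corollary4p3:
  fixes n :: nat
    and \<kappa> f df :: "real \<Rightarrow> real"
    and \<phi> d\<phi> dd\<phi> :: "real \<Rightarrow> real"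
    and h dh ddh :: "real \<Rightarrow> real"
    and t0 :: real
    and \<mu>0 \<mu>1 lam :: real
    and r dr ddr :: "real \<Rightarrow> real"
  assumes n2: "n \<ge> 2"
    \<comment> \<open>kappa continuous on [0,inf), integrability conditions\<close>
    and kappa_cont: "continuous_on {0..} \<kappa>"
    and mu_pos: "mu_pos_inf \<kappa> \<le> 1"
    and mu_neg: "mu_neg_inf \<kappa> < \<infinity>"
    \<comment> \<open>f'' + kappa f = 0 on [0,inf), f(0)=0, f'(0)=1; df = f'\<close>
    and f_deriv: "\<And>x. x \<ge> 0 \<Longrightarrow> (f has_real_derivative df x) (at x within {0..})"
    and df_deriv: "\<And>x. x \<ge> 0 \<Longrightarrow> (df has_real_derivative (- \<kappa> x * f x)) (at x within {0..})"
    and f0: "f 0 = 0" and df0: "df 0 = 1"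
    \<comment> \<open>(A1): h is C^2 and strictly convex (on (0,inf))\<close>
    and h_deriv: "\<And>x. x > 0 \<Longrightarrow> (h has_real_derivative dh x) (at x)"
    and dh_deriv: "\<And>x. x > 0 \<Longrightarrow> (dh has_real_derivative ddh x) (at x)"
    and ddh_cont: "continuous_on {0<..} ddh"
    and h_sconv: "strictly_convex_on {0<..} h"
    \<comment> \<open>(A4): phi : (0,inf) -> (0,inf) is C^2 and convex\<close>
    and phi_pos: "\<And>x. x > 0 \<Longrightarrow> \<phi> x > 0"
    and phi_deriv: "\<And>x. x > 0 \<Longrightarrow> (\<phi> has_real_derivative d\<phi> x) (at x)"
    and dphi_deriv: "\<And>x. x > 0 \<Longrightarrow> (d\<phi> has_real_derivative dd\<phi> x) (at x)"
    and ddphi_cont: "continuous_on {0<..} dd\<phi>"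
    and phi_conv: "convex_on {0<..} \<phi>"
    \<comment> \<open>(A5): v phi'(v) is increasing\<close>
    and A5: "mono_on {0<..} (\<lambda>v. v * d\<phi> v)"
    \<comment> \<open>(A6)\<close>
    and t0: "(t0 > 0 \<and> d\<phi> t0 = 0) \<or> (t0 = 0 \<and> (d\<phi> \<longlongrightarrow> 0) (at_right 0))"
    and q1_bdd: "\<And>s. s \<ge> 1 \<Longrightarrow> bdd_above ((\<lambda>v. d\<phi> v / d\<phi> (s * v)) ` {t0<..})"
    and q0_bdd: "\<And>s. 0 < s \<Longrightarrow> s \<le> 1 \<Longrightarrow> bdd_below ((\<lambda>v. d\<phi> v / d\<phi> (s * v)) ` {t0 / s<..})"
    and q1_C1: "\<exists>dq1. (\<forall>s\<ge>1. (q1_fun d\<phi> t0 has_real_derivative dq1 s) (at s within {1..}))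
                      \<and> continuous_on {1..} dq1 \<and> (\<forall>s\<ge>1. dq1 s < 0)"
    and q0_C1: "\<exists>dq0. (\<forall>s\<in>{0<..1}. (q0_fun d\<phi> t0 has_real_derivative dq0 s) (at s within {0<..1}))
                      \<and> continuous_on {0<..1} dq0 \<and> (\<forall>s\<in>{0<..1}. dq0 s < 0)"
    and q1_lim: "(q1_fun d\<phi> t0 \<longlongrightarrow> 0) at_top"
    and q0_lim: "filterlim (q0_fun d\<phi> t0) at_top (at_right 0)"
    \<comment> \<open>bounds on f and f'\<close>
    and mu0_pos: "0 < \<mu>0" and mu01: "\<mu>0 \<le> \<mu>1"
    and df_bounds: "\<And>\<rho>. \<rho> \<ge> 0 \<Longrightarrow> \<mu>0 \<le> df \<rho> \<and> df \<rho> \<le> \<mu>1"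
    and f_bounds: "\<And>\<rho>. \<rho> \<ge> 0 \<Longrightarrow> \<mu>0 * \<rho> \<le> f \<rho> \<and> f \<rho> \<le> \<mu>1 * \<rho>"
    \<comment> \<open>r is a regular equilibrium solution with r(1) = lam > 0; dr = r', ddr = r''\<close>
    and lam_pos: "lam > 0"
    and r_deriv: "\<And>\<rho>. \<rho> \<in> {0<..1} \<Longrightarrow> (r has_real_derivative dr \<rho>) (at \<rho> within {0<..1})"
    and dr_cont: "continuous_on {0<..1} dr"
    and dr_deriv: "\<And>\<rho>. \<rho> \<in> {0<..<1} \<Longrightarrow> (dr has_real_derivative ddr \<rho>) (at \<rho>)"
    and dr_pos: "\<And>\<rho>. \<rho> \<in> {0<..1} \<Longrightarrow> dr \<rho> > 0"
    and r_regular: "(r \<longlongrightarrow> 0) (at_right 0)"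
    and r1: "r 1 = lam"
    and equil: "\<And>\<rho>. \<rho> \<in> {0<..<1} \<Longrightarrow>
        f \<rho> * (dd\<phi> (dr \<rho>) + ddh (dr \<rho> * tau_fun f r \<rho> ^ (n - 1)) * tau_fun f r \<rho> ^ (2 * (n - 1)))
            * ddr \<rho>
        = real (n - 1) * (df (r \<rho>) * d\<phi> (tau_fun f r \<rho>) - df \<rho> * d\<phi> (dr \<rho>))
          - real (n - 1) * (df (r \<rho>) * dr \<rho> - df \<rho> * tau_fun f r \<rho>)
              * ddh (dr \<rho> * tau_fun f r \<rho> ^ (n - 1)) * dr \<rho> * tau_fun f r \<rho> ^ (2 * n - 3)"
  shows "\<forall>\<rho>\<in>{0<..1}.
           min (\<mu>0 / \<mu>1) (the_inv_into {0<..1} (q0_fun d\<phi> t0) (\<mu>1 / \<mu>0)) * tau_fun f r \<rho> \<le> dr \<rho>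
         \<and> dr \<rho> \<le> max (\<mu>1 / \<mu>0) (the_inv_into {1..} (q1_fun d\<phi> t0) (\<mu>0 / \<mu>1)) * tau_fun f r \<rho>"
proof -
  obtain m where nm: "n = m + 2" using n2 by (metis add.commute le_Suc_ex)
  define tt where "tt = tau_fun f r"
  have tt_eq: "tt = (\<lambda>x. f (r x) / f x)" by (simp add: tt_def tau_fun_def[abs_def])
  have mu1_pos: "\<mu>1 > 0" using mu0_pos mu01 by simp
  have fpos: "\<And>x. x > 0 \<Longrightarrow> f x > 0"
  proof -
    fix x :: real assume "x > 0"
    then have "\<mu>0 * x > 0" using mu0_pos by simp
    then show "f x > 0" using f_bounds[of x] \<open>x > 0\<close> by linarith
  qed
  have f_at: "\<And>x. x > 0 \<Longrightarrow> (f has_real_derivative df x) (at x)"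
  proof -
    fix x :: real assume x: "x > 0"
    have "at x within {0..} = at x"
      by (rule at_within_open_subset[of x "{0<..}"]) (use x in auto)
    then show "(f has_real_derivative df x) (at x)" using f_deriv[of x] x by simp
  qed
  have f_cont: "continuous_on {0<..} f"
    by (rule continuous_at_imp_continuous_on) (use f_at DERIV_isCont in auto)
  have r_at: "\<And>x. 0 < x \<Longrightarrow> x < 1 \<Longrightarrow> (r has_real_derivative dr x) (at x)"
  proof -
    fix x :: real assume x: "0 < x" "x < 1"
    have "at x within {0<..1} = at x"
      by (rule at_within_open_subset[of x "{0<..<1}"]) (use x in auto)
    then show "(r has_real_derivative dr x) (at x)" using r_deriv[of x] x by simp
  qed
  have r_cont: "continuous_on {0<..1} r"
    unfolding continuous_on_eq_continuous_within using r_deriv DERIV_continuous by blast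
  have r_inc: "\<And>a b. 0 < a \<Longrightarrow> a < b \<Longrightarrow> b \<le> 1 \<Longrightarrow> r a < r b"
  proof -
    fix a b :: real assume ab: "0 < a" "a < b" "b \<le> 1"
    show "r a < r b"
    proof (rule DERIV_pos_imp_increasing_open[OF ab(2)])
      fix x assume "a < x" "x < b"
      then show "\<exists>y. (r has_real_derivative y) (at x) \<and> y > 0"
        using r_at dr_pos ab by force
    next
      show "continuous_on {a..b} r" by (rule continuous_on_subset[OF r_cont]) (use ab in auto)
    qed
  qed
  have r_nn: "\<And>x. 0 < x \<Longrightarrow> x \<le> 1 \<Longrightarrow> 0 \<le> r x"
  proof -
    fix x :: real assume x: "0 < x" "x \<le> 1"
    have ev: "eventually (\<lambda>y. r y \<le> r x) (at_right 0)"
      unfolding eventually_at_right_field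
      by (rule exI[of _ x]) (use x r_inc in \<open>auto intro: less_imp_le\<close>)
    show "0 \<le> r x" by (rule tendsto_upperbound[OF r_regular ev]) simp
  qed
  have r_pos: "\<And>x. 0 < x \<Longrightarrow> x \<le> 1 \<Longrightarrow> 0 < r x"
  proof -
    fix x :: real assume x: "0 < x" "x \<le> 1"
    have "r (x/2) < r x" using r_inc[of "x/2" x] x by simp
    moreover have "0 \<le> r (x/2)" using r_nn[of "x/2"] x by simp
    ultimately show "0 < r x" by simp
  qed
  have tt_pos: "\<And>x. 0 < x \<Longrightarrow> x \<le> 1 \<Longrightarrow> 0 < tt x"
    using fpos r_pos by (simp add: tt_eq)
  have tt_cont: "continuous_on {0<..1} tt"
  proof -
    have 1: "continuous_on {0<..1} (\<lambda>x. f (r x))"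
      by (rule continuous_on_compose2[OF f_cont r_cont]) (use r_pos in auto)
    have 2: "continuous_on {0<..1} f" by (rule continuous_on_subset[OF f_cont]) auto
    show ?thesis unfolding tt_eq by (rule continuous_on_divide[OF 1 2]) (metis fpos greaterThanAtMost_iff less_irrefl)
  qed
  define dt where "dt x = (df (r x) * dr x - df x * tt x) / f x" for x
  have tt_at: "\<And>x. 0 < x \<Longrightarrow> x < 1 \<Longrightarrow> (tt has_real_derivative dt x) (at x)"
  proof -
    fix x :: real assume x: "0 < x" "x < 1"
    have 1: "((\<lambda>x. f (r x)) has_real_derivative df (r x) * dr x) (at x)"
      by (rule DERIV_chain2[OF f_at r_at]) (use x r_pos in auto)
    have 2: "((\<lambda>x. f (r x) / f x) has_real_derivative
              (df (r x) * dr x * f x - f (r x) * df x) / (f x * f x)) (at x)"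
      by (rule DERIV_divide[OF 1 f_at]) (use x fpos[of x] in auto)
    have "(df (r x) * dr x * f x - f (r x) * df x) / (f x * f x) = dt x"
      using fpos[of x] x by (simp add: dt_def tt_eq field_simps)
    then show "(tt has_real_derivative dt x) (at x)" using 2 by (simp add: tt_eq)
  qed
  have dphi_mono: "\<And>x y. 0 < x \<Longrightarrow> x \<le> y \<Longrightarrow> d\<phi> x \<le> d\<phi> y"
    using conv_deriv_mono[OF phi_conv phi_deriv] by blast
  have ddphi_nn: "\<And>x. 0 < x \<Longrightarrow> 0 \<le> dd\<phi> x"
    using deriv_nonneg_of_mono[OF dphi_mono _ dphi_deriv] by blast
  have dh_strict: "\<And>x y. 0 < x \<Longrightarrow> x < y \<Longrightarrow> dh x < dh y"
    using sconv_deriv_strict[OF h_sconv h_deriv] by blast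
  have dh_mono: "\<And>x y. 0 < x \<Longrightarrow> x \<le> y \<Longrightarrow> dh x \<le> dh y"
    using dh_strict by (metis order_le_less)
  have ddh_nn: "\<And>x. 0 < x \<Longrightarrow> 0 \<le> ddh x"
    using deriv_nonneg_of_mono[OF dh_mono _ dh_deriv] by blast
  have dphi_cont: "continuous_on {0<..} d\<phi>"
    by (rule continuous_at_imp_continuous_on) (use dphi_deriv DERIV_isCont in auto)
  have dh_cont: "continuous_on {0<..} dh"
    by (rule continuous_at_imp_continuous_on) (use dh_deriv DERIV_isCont in auto)
  have t0_nn: "0 \<le> t0" using t0 by auto
  have dphi_ne: "\<And>u. u > t0 \<Longrightarrow> d\<phi> u \<noteq> 0"
  proof
    fix u assume u: "u > t0" and z: "d\<phi> u = 0"
    have ev: "eventually (\<lambda>s. q0_fun d\<phi> t0 s > 0) (at_right 0)"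
      using q0_lim by (simp add: filterlim_at_top_dense)
    have ev2: "eventually (\<lambda>s. s < 1) (at_right (0::real))"
      unfolding eventually_at_right_field by (rule exI[of _ 1]) auto
    obtain b where b: "b > 0" "\<And>y. y > 0 \<Longrightarrow> y < b \<Longrightarrow> q0_fun d\<phi> t0 y > 0 \<and> y < 1"
      using eventually_conj[OF ev ev2] unfolding eventually_at_right_field by auto
    define s where "s = min (b/2) (1/2)"
    have s: "0 < s" "s < b" using b by (auto simp: s_def)
    have s1: "s \<le> 1" by (simp add: s_def)
    have pos: "q0_fun d\<phi> t0 s > 0" using b(2)[OF s] by simp
    have mem: "u / s \<in> {t0 / s<..}" using u s by (simp add: divide_strict_right_mono)
    have "q0_fun d\<phi> t0 s \<le> d\<phi> (u / s) / d\<phi> (s * (u / s))"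
      unfolding q0_fun_def by (rule cINF_lower[OF q0_bdd[OF s(1) s1] mem])
    also have "\<dots> = 0" using z s by simp
    finally show False using pos by simp
  qed
  have dphi_nn: "\<And>u. u > t0 \<Longrightarrow> 0 \<le> d\<phi> u"
  proof -
    fix u assume u: "u > t0"
    show "0 \<le> d\<phi> u"
    proof (cases "t0 > 0")
      case True
      then have "d\<phi> t0 = 0" using t0 by auto
      then show ?thesis using dphi_mono[of t0 u] True u by simp
    next
      case False
      then have t00: "t0 = 0" and lim: "(d\<phi> \<longlongrightarrow> 0) (at_right 0)" using t0 by auto
      have ev: "eventually (\<lambda>y. d\<phi> y \<le> d\<phi> u) (at_right 0)"
        unfolding eventually_at_right_field
        by (rule exI[of _ u]) (use u t00 dphi_mono in \<open>auto\<close>)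
      show ?thesis by (rule tendsto_upperbound[OF lim ev]) simp
    qed
  qed
  have dphi_pos: "\<And>u. u > t0 \<Longrightarrow> 0 < d\<phi> u"
    using dphi_nn dphi_ne by (metis order_le_less)
  have dphi_np: "\<And>u. 0 < u \<Longrightarrow> u \<le> t0 \<Longrightarrow> d\<phi> u \<le> 0"
  proof -
    fix u assume u: "0 < u" "u \<le> t0"
    then have "t0 > 0" by simp
    then have "d\<phi> t0 = 0" using t0 by auto
    then show "d\<phi> u \<le> 0" using dphi_mono[of u t0] u by simp
  qed
  define q1 where "q1 = q1_fun d\<phi> t0"
  obtain dq1 where dq1: "\<And>s. s \<ge> 1 \<Longrightarrow> (q1 has_real_derivative dq1 s) (at s within {1..})"
      "\<And>s. s \<ge> 1 \<Longrightarrow> dq1 s < 0"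
    using q1_C1 unfolding q1_def by blast
  have q1_cont: "continuous_on {1..} q1"
    unfolding continuous_on_eq_continuous_within using dq1(1) DERIV_continuous by blast
  have q1_at: "\<And>s. s > 1 \<Longrightarrow> (q1 has_real_derivative dq1 s) (at s)"
  proof -
    fix s :: real assume s: "s > 1"
    have "at s within {1..} = at s"
      by (rule at_within_open_subset[of s "{1<..}"]) (use s in auto)
    then show "(q1 has_real_derivative dq1 s) (at s)" using dq1(1)[of s] s by simp
  qed
  have q1_dec: "\<And>a b. 1 \<le> a \<Longrightarrow> a < b \<Longrightarrow> q1 b < q1 a"
  proof -
    fix a b :: real assume ab: "1 \<le> a" "a < b"
    show "q1 b < q1 a"
    proof (rule DERIV_neg_imp_decreasing_open[OF ab(2)])
      fix x assume "a < x" "x < b"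
      then show "\<exists>y. (q1 has_real_derivative y) (at x) \<and> y < 0"
        using q1_at dq1(2) ab by force
    next
      show "continuous_on {a..b} q1" by (rule continuous_on_subset[OF q1_cont]) (use ab in auto)
    qed
  qed
  have q1_one: "q1 1 = 1"
  proof -
    have "q1 1 = (SUP v\<in>{t0<..}. (1::real))"
      unfolding q1_def q1_fun_def by (rule SUP_cong) (use dphi_ne in auto)
    also have "\<dots> = 1" by simp
    finally show ?thesis .
  qed
  have mr1: "0 < \<mu>0 / \<mu>1" "\<mu>0 / \<mu>1 \<le> 1" using mu0_pos mu1_pos mu01 by auto
  obtain B where B: "\<And>s. s \<ge> B \<Longrightarrow> q1 s < \<mu>0 / \<mu>1"
    using order_tendstoD(2)[OF q1_lim mr1(1)] unfolding q1_def eventually_at_top_linorder by blast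
  define b1 where "b1 = max B 1"
  obtain s1 where s1: "1 \<le> s1" "s1 \<le> b1" "q1 s1 = \<mu>0 / \<mu>1"
  proof -
    have "\<exists>x\<ge>1. x \<le> b1 \<and> q1 x = \<mu>0 / \<mu>1"
    proof (rule IVT2')
      show "q1 b1 \<le> \<mu>0 / \<mu>1" using B[of b1] by (simp add: b1_def)
      show "\<mu>0 / \<mu>1 \<le> q1 1" using q1_one mr1 by simp
      show "1 \<le> b1" by (simp add: b1_def)
      show "continuous_on {1..b1} q1" by (rule continuous_on_subset[OF q1_cont]) auto
    qed
    then show ?thesis using that by blast
  qed
  have q1_inj: "inj_on q1 {1..}"
  proof (rule inj_onI)
    fix x y assume xy: "x \<in> {1..}" "y \<in> {1..}" "q1 x = q1 y"
    show "x = y"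
    proof (rule ccontr)
      assume "x \<noteq> y"
      then consider "x < y" | "y < x" by linarith
      then show False using q1_dec xy by (cases) (fastforce+)
    qed
  qed
  have inv1: "the_inv_into {1..} (q1_fun d\<phi> t0) (\<mu>0 / \<mu>1) = s1"
    using the_inv_into_f_f[OF q1_inj, of s1] s1 unfolding q1_def by simp
  have q1_small: "\<And>s. s \<ge> s1 \<Longrightarrow> q1 s \<le> \<mu>0 / \<mu>1"
    using q1_dec s1 by (metis order_le_less order_less_imp_le)
  define q0 where "q0 = q0_fun d\<phi> t0"
  obtain dq0 where dq0: "\<And>s. s \<in> {0<..1} \<Longrightarrow> (q0 has_real_derivative dq0 s) (at s within {0<..1})"
      "\<And>s. s \<in> {0<..1} \<Longrightarrow> dq0 s < 0"
    using q0_C1 unfolding q0_def by blast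
  have q0_cont: "continuous_on {0<..1} q0"
    unfolding continuous_on_eq_continuous_within using dq0(1) DERIV_continuous by blast
  have q0_at: "\<And>s. 0 < s \<Longrightarrow> s < 1 \<Longrightarrow> (q0 has_real_derivative dq0 s) (at s)"
  proof -
    fix s :: real assume s: "0 < s" "s < 1"
    have "at s within {0<..1} = at s"
      by (rule at_within_open_subset[of s "{0<..<1}"]) (use s in auto)
    then show "(q0 has_real_derivative dq0 s) (at s)" using dq0(1)[of s] s by simp
  qed
  have q0_dec: "\<And>a b. 0 < a \<Longrightarrow> a < b \<Longrightarrow> b \<le> 1 \<Longrightarrow> q0 b < q0 a"
  proof -
    fix a b :: real assume ab: "0 < a" "a < b" "b \<le> 1"
    show "q0 b < q0 a"
    proof (rule DERIV_neg_imp_decreasing_open[OF ab(2)])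
      fix x assume "a < x" "x < b"
      then show "\<exists>y. (q0 has_real_derivative y) (at x) \<and> y < 0"
        using q0_at dq0(2) ab by force
    next
      show "continuous_on {a..b} q0" by (rule continuous_on_subset[OF q0_cont]) (use ab in auto)
    qed
  qed
  have q0_one: "q0 1 = 1"
  proof -
    have "q0 1 = (INF v\<in>{t0<..}. (1::real))"
      unfolding q0_def q0_fun_def by (rule INF_cong) (use dphi_ne in auto)
    also have "\<dots> = 1" by simp
    finally show ?thesis .
  qed
  have mr0: "1 \<le> \<mu>1 / \<mu>0" using mu0_pos mu01 by simp
  obtain a0 where a0: "0 < a0" "a0 < 1" "q0 a0 > \<mu>1 / \<mu>0"
  proof -
    have ev: "eventually (\<lambda>s. q0 s > \<mu>1 / \<mu>0) (at_right 0)"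
      using q0_lim unfolding q0_def by (simp add: filterlim_at_top_dense)
    obtain b where b: "b > 0" "\<And>y. y > 0 \<Longrightarrow> y < b \<Longrightarrow> q0 y > \<mu>1 / \<mu>0"
      using ev unfolding eventually_at_right_field by auto
    define s where "s = min (b/2) (1/2)"
    have "0 < s" "s < b" "s < 1" using b by (auto simp: s_def)
    then show ?thesis using that b by blast
  qed
  obtain s0 where s0: "a0 \<le> s0" "s0 \<le> 1" "q0 s0 = \<mu>1 / \<mu>0"
  proof -
    have "\<exists>x\<ge>a0. x \<le> 1 \<and> q0 x = \<mu>1 / \<mu>0"
    proof (rule IVT2')
      show "q0 1 \<le> \<mu>1 / \<mu>0" using q0_one mr0 by simp
      show "\<mu>1 / \<mu>0 \<le> q0 a0" using a0 by simp
      show "a0 \<le> 1" using a0 by simp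
      show "continuous_on {a0..1} q0" by (rule continuous_on_subset[OF q0_cont]) (use a0 in auto)
    qed
    then show ?thesis using that by blast
  qed
  have s0_pos: "0 < s0" using s0 a0 by simp
  have q0_inj: "inj_on q0 {0<..1}"
  proof (rule inj_onI)
    fix x y assume xy: "x \<in> {0<..1}" "y \<in> {0<..1}" "q0 x = q0 y"
    show "x = y"
    proof (rule ccontr)
      assume "x \<noteq> y"
      then consider "x < y" | "y < x" by linarith
      then show False using q0_dec xy by (cases) (fastforce+)
    qed
  qed
  have inv0: "the_inv_into {0<..1} (q0_fun d\<phi> t0) (\<mu>1 / \<mu>0) = s0"
    using the_inv_into_f_f[OF q0_inj, of s0] s0 s0_pos unfolding q0_def by simp
  have q0_big: "\<And>s. 0 < s \<Longrightarrow> s \<le> s0 \<Longrightarrow> \<mu>1 / \<mu>0 \<le> q0 s"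
    using q0_dec s0 by (metis order_le_less order_less_imp_le)
  define e1 where "e1 = max (\<mu>1 / \<mu>0) s1"
  define e0 where "e0 = min (\<mu>0 / \<mu>1) s0"
  have e1_ge: "\<mu>1 / \<mu>0 \<le> e1" "s1 \<le> e1" "1 \<le> e1" using s1 mr0 by (auto simp: e1_def)
  have e0_le: "e0 \<le> \<mu>0 / \<mu>1" "e0 \<le> s0" "0 < e0" "e0 \<le> 1" using s0 s0_pos mr1 by (auto simp: e0_def)
  have e1_mu: "\<mu>1 \<le> \<mu>0 * e1" using e1_ge(1) mu0_pos by (simp add: field_simps)
  have e0_mu: "\<mu>1 * e0 \<le> \<mu>0" using e0_le(1) mu1_pos by (simp add: field_simps)
  define X where "X x = df (r x) * d\<phi> (tt x) - df x * d\<phi> (dr x)" for x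
  have Xup: "\<And>x. 0 < x \<Longrightarrow> x \<le> 1 \<Longrightarrow> e1 * tt x \<le> dr x \<Longrightarrow> X x \<le> 0"
  proof -
    fix x :: real assume x: "0 < x" "x \<le> 1" and w: "e1 * tt x \<le> dr x"
    define T where "T = tt x"
    define D where "D = dr x"
    define s where "s = D / T"
    have T: "0 < T" using tt_pos x by (simp add: T_def)
    have D: "0 < D" using dr_pos x by (simp add: D_def)
    have sT: "s * T = D" using T by (simp add: s_def)
    have se: "e1 \<le> s" using w T by (simp add: s_def T_def D_def field_simps)
    have s_ge1: "1 \<le> s" and s_mu: "\<mu>1 / \<mu>0 \<le> s" and s_s1: "s1 \<le> s" using se e1_ge by auto
    have TD: "T \<le> D" using sT T s_ge1 by (metis mult_le_cancel_right1 less_le_not_le)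
    have dfr: "\<mu>0 \<le> df (r x)" "df (r x) \<le> \<mu>1" using df_bounds[of "r x"] r_pos[OF x] by auto
    have dfx: "\<mu>0 \<le> df x" "df x \<le> \<mu>1" using df_bounds[of x] x by auto
    show "X x \<le> 0"
    proof (cases "T > t0")
      case True
      have pT: "0 < d\<phi> T" using dphi_pos True by simp
      have pD: "0 < d\<phi> D" using dphi_pos True TD by simp
      have "d\<phi> T / d\<phi> (s * T) \<le> q1 s"
        unfolding q1_def q1_fun_def by (rule cSUP_upper) (use True q1_bdd[OF s_ge1] in auto)
      also have "\<dots> \<le> \<mu>0 / \<mu>1" using q1_small[OF s_s1] .
      finally have "d\<phi> T / d\<phi> D \<le> \<mu>0 / \<mu>1" using sT by simp
      then have k: "\<mu>1 * d\<phi> T \<le> \<mu>0 * d\<phi> D" using pD mu1_pos by (simp add: field_simps)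
      have "df (r x) * d\<phi> T \<le> \<mu>1 * d\<phi> T" using dfr pT by (simp add: mult_right_mono)
      moreover have "\<mu>0 * d\<phi> D \<le> df x * d\<phi> D" using dfx pD by (simp add: mult_right_mono)
      ultimately show ?thesis using k by (simp add: X_def T_def D_def)
    next
      case False
      have nT: "d\<phi> T \<le> 0" using dphi_np T False by simp
      show ?thesis
      proof (cases "0 \<le> d\<phi> D")
        case True
        have "df (r x) * d\<phi> T \<le> 0" using nT dfr mu0_pos by (simp add: mult_nonneg_nonpos)
        moreover have "0 \<le> df x * d\<phi> D" using True dfx mu0_pos by simp
        ultimately show ?thesis by (simp add: X_def T_def D_def)
      next
        case False
        have a5: "T * d\<phi> T \<le> D * d\<phi> D" using A5 T D TD by (auto intro: mono_onD)
        then have "T * d\<phi> T \<le> s * T * d\<phi> D" using sT by simp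
        then have "d\<phi> T \<le> s * d\<phi> D" using T by (simp add: mult.assoc mult.left_commute[of s])
        also have "s * d\<phi> D \<le> (\<mu>1 / \<mu>0) * d\<phi> D" using mult_right_mono_neg[OF s_mu, of "d\<phi> D"] False by simp
        finally have k: "\<mu>0 * d\<phi> T \<le> \<mu>1 * d\<phi> D" using mu0_pos by (simp add: field_simps)
        have "df (r x) * d\<phi> T \<le> \<mu>0 * d\<phi> T" using mult_right_mono_neg[OF dfr(1) nT] by simp
        moreover have "\<mu>1 * d\<phi> D \<le> df x * d\<phi> D" using mult_right_mono_neg[OF dfx(2), of "d\<phi> D"] False by simp
        ultimately show ?thesis using k by (simp add: X_def T_def D_def)
      qed
    qed
  qed
  have Xlow: "\<And>x. 0 < x \<Longrightarrow> x \<le> 1 \<Longrightarrow> dr x \<le> e0 * tt x \<Longrightarrow> 0 \<le> X x"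
  proof -
    fix x :: real assume x: "0 < x" "x \<le> 1" and w: "dr x \<le> e0 * tt x"
    define T where "T = tt x"
    define D where "D = dr x"
    define s where "s = D / T"
    have T: "0 < T" using tt_pos x by (simp add: T_def)
    have D: "0 < D" using dr_pos x by (simp add: D_def)
    have sT: "s * T = D" using T by (simp add: s_def)
    have s_pos: "0 < s" using T D by (simp add: s_def)
    have se: "s \<le> e0" using w T by (simp add: s_def T_def D_def field_simps)
    have s_le1: "s \<le> 1" and s_mu: "s \<le> \<mu>0 / \<mu>1" and s_s0: "s \<le> s0" using se e0_le by auto
    have TD: "D \<le> T" using sT T s_le1 by (metis mult_le_cancel_right2 less_le_not_le)
    have dfr: "\<mu>0 \<le> df (r x)" "df (r x) \<le> \<mu>1" using df_bounds[of "r x"] r_pos[OF x] by auto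
    have dfx: "\<mu>0 \<le> df x" "df x \<le> \<mu>1" using df_bounds[of x] x by auto
    show "0 \<le> X x"
    proof (cases "D > t0")
      case True
      have pT: "0 < d\<phi> T" using dphi_pos True TD by simp
      have pD: "0 < d\<phi> D" using dphi_pos True by simp
      have mem: "T \<in> {t0 / s<..}" using True sT s_pos by (simp add: field_simps)
      have "\<mu>1 / \<mu>0 \<le> q0 s" using q0_big[OF s_pos s_s0] .
      also have "q0 s \<le> d\<phi> T / d\<phi> (s * T)"
        unfolding q0_def q0_fun_def
        by (rule cINF_lower[OF q0_bdd[OF s_pos order_trans[OF s_s0 s0(2)]] mem])
      finally have "\<mu>1 / \<mu>0 \<le> d\<phi> T / d\<phi> D" using sT by simp
      then have k: "\<mu>1 * d\<phi> D \<le> \<mu>0 * d\<phi> T" using pD mu0_pos by (simp add: field_simps)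
      have "\<mu>0 * d\<phi> T \<le> df (r x) * d\<phi> T" using dfr pT by (simp add: mult_right_mono)
      moreover have "df x * d\<phi> D \<le> \<mu>1 * d\<phi> D" using dfx pD by (simp add: mult_right_mono)
      ultimately show ?thesis using k by (simp add: X_def T_def D_def)
    next
      case False
      have nD: "d\<phi> D \<le> 0" using dphi_np D False by simp
      show ?thesis
      proof (cases "0 \<le> d\<phi> T")
        case True
        have "0 \<le> df (r x) * d\<phi> T" using True dfr mu0_pos by simp
        moreover have "df x * d\<phi> D \<le> 0" using nD dfx mu0_pos by (simp add: mult_nonneg_nonpos)
        ultimately show ?thesis by (simp add: X_def T_def D_def)
      next
        case False
        have a5: "D * d\<phi> D \<le> T * d\<phi> T" using A5 T D TD by (auto intro: mono_onD)
        then have "s * T * d\<phi> D \<le> T * d\<phi> T" using sT by simp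
        then have "s * d\<phi> D \<le> d\<phi> T" using T by (simp add: mult.assoc mult.left_commute[of s])
        then have "d\<phi> D \<le> d\<phi> T / s" using s_pos by (simp add: field_simps)
        also have "d\<phi> T / s \<le> (\<mu>1 / \<mu>0) * d\<phi> T"
        proof -
          have "\<mu>1 / \<mu>0 \<le> 1 / s" using s_mu s_pos mu0_pos mu1_pos by (simp add: field_simps)
          then have "(1 / s) * d\<phi> T \<le> (\<mu>1 / \<mu>0) * d\<phi> T" using mult_right_mono_neg[OF \<open>\<mu>1 / \<mu>0 \<le> 1 / s\<close>, of "d\<phi> T"] False by simp
          then show ?thesis by simp
        qed
        finally have k: "\<mu>0 * d\<phi> D \<le> \<mu>1 * d\<phi> T" using mu0_pos by (simp add: field_simps)
        have "\<mu>1 * d\<phi> T \<le> df (r x) * d\<phi> T" using mult_right_mono_neg[OF dfr(2), of "d\<phi> T"] False by simp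
        moreover have "df x * d\<phi> D \<le> \<mu>0 * d\<phi> D" using mult_right_mono_neg[OF dfx(1) nD] by simp
        ultimately show ?thesis using k by (simp add: X_def T_def D_def)
      qed
    qed
  qed
  have n1: "n - 1 = Suc m" using nm by simp
  have n3: "2 * n - 3 = 2 * m + 1" using nm by simp
  define G where "G x = dr x * tt x ^ Suc m" for x
  have G_eq: "G = (\<lambda>x. dr x * tt x ^ Suc m)" by (rule ext) (simp add: G_def)
  define dG where "dG x = ddr x * tt x ^ Suc m + dr x * (real (Suc m) * tt x ^ m * dt x)" for x
  have G_pos: "\<And>x. 0 < x \<Longrightarrow> x \<le> 1 \<Longrightarrow> 0 < G x" using dr_pos tt_pos by (simp add: G_def)
  have G_at: "\<And>x. 0 < x \<Longrightarrow> x < 1 \<Longrightarrow> (G has_real_derivative dG x) (at x)"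
  proof -
    fix x :: real assume x: "0 < x" "x < 1"
    have p: "((\<lambda>x. tt x ^ Suc m) has_real_derivative of_nat (Suc m) * (dt x * tt x ^ (Suc m - Suc 0))) (at x)"
      by (rule DERIV_power[OF tt_at]) (use x in auto)
    have "(G has_real_derivative ddr x * tt x ^ Suc m + (of_nat (Suc m) * (dt x * tt x ^ (Suc m - Suc 0))) * dr x) (at x)"
      unfolding G_eq by (rule DERIV_mult[OF dr_deriv p]) (use x in auto)
    then show "(G has_real_derivative dG x) (at x)" by (simp add: dG_def algebra_simps)
  qed
  have K_at: "\<And>x c. 0 < x \<Longrightarrow> x < 1 \<Longrightarrow>
      ((\<lambda>y. d\<phi> (dr y) + c * dh (G y)) has_real_derivative dd\<phi> (dr x) * ddr x + c * (ddh (G x) * dG x)) (at x)"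
  proof -
    fix x c :: real assume x: "0 < x" "x < 1"
    have Q: "((\<lambda>y. d\<phi> (dr y)) has_real_derivative dd\<phi> (dr x) * ddr x) (at x)"
      by (rule DERIV_chain2[OF dphi_deriv dr_deriv]) (use x dr_pos[of x] in auto)
    have H: "((\<lambda>y. dh (G y)) has_real_derivative ddh (G x) * dG x) (at x)"
      by (rule DERIV_chain2[OF dh_deriv G_at]) (use x G_pos[of x] in auto)
    show "((\<lambda>y. d\<phi> (dr y) + c * dh (G y)) has_real_derivative dd\<phi> (dr x) * ddr x + c * (ddh (G x) * dG x)) (at x)"
      by (rule DERIV_add[OF Q DERIV_cmult[OF H]])
  qed
  have K_cont: "\<And>a b c. 0 < a \<Longrightarrow> b \<le> 1 \<Longrightarrow> continuous_on {a..b} (\<lambda>y. d\<phi> (dr y) + c * dh (G y))"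
  proof -
    fix a b c :: real assume ab: "0 < a" "b \<le> 1"
    have 1: "continuous_on {a..b} dr" by (rule continuous_on_subset[OF dr_cont]) (use ab in auto)
    have 2: "continuous_on {a..b} tt" by (rule continuous_on_subset[OF tt_cont]) (use ab in auto)
    have g: "continuous_on {a..b} G" unfolding G_eq by (intro continuous_intros 1 2)
    have q: "continuous_on {a..b} (\<lambda>y. d\<phi> (dr y))"
      by (rule continuous_on_compose2[OF dphi_cont 1]) (use dr_pos ab in force)
    have h: "continuous_on {a..b} (\<lambda>y. dh (G y))"
      by (rule continuous_on_compose2[OF dh_cont g]) (use G_pos ab in force)
    show "continuous_on {a..b} (\<lambda>y. d\<phi> (dr y) + c * dh (G y))" by (intro continuous_intros q h)
  qed
  have ode: "\<And>x. 0 < x \<Longrightarrow> x < 1 \<Longrightarrow>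
      f x * (dd\<phi> (dr x) * ddr x + tt x ^ Suc m * (ddh (G x) * dG x)) = real (Suc m) * X x"
  proof -
    fix x :: real assume x: "0 < x" "x < 1"
    have ex: "x \<in> {0<..<1}" using x by simp
    have e: "f x * (dd\<phi> (dr x) + ddh (dr x * tt x ^ Suc m) * tt x ^ (2 * Suc m)) * ddr x
        = real (Suc m) * (df (r x) * d\<phi> (tt x) - df x * d\<phi> (dr x))
          - real (Suc m) * (df (r x) * dr x - df x * tt x)
              * ddh (dr x * tt x ^ Suc m) * dr x * tt x ^ (2 * m + 1)"
      using equil[OF ex] unfolding n1 n3 tt_def[symmetric] by simp
    have p1: "tt x ^ (2 * Suc m) = tt x ^ Suc m * tt x ^ Suc m" by (simp add: mult_2 power_add)
    have p2: "tt x ^ (2 * m + 1) = tt x ^ Suc m * tt x ^ m"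
      by (simp only: power_add[symmetric]) (rule arg_cong[where f="\<lambda>k. tt x ^ k"], simp)
    have fdt: "f x * dt x = df (r x) * dr x - df x * tt x" using fpos[of x] x by (simp add: dt_def)
    have "f x * (dd\<phi> (dr x) * ddr x + tt x ^ Suc m * (ddh (G x) * dG x))
        = f x * (dd\<phi> (dr x) + ddh (G x) * (tt x ^ Suc m * tt x ^ Suc m)) * ddr x
          + real (Suc m) * (f x * dt x) * ddh (G x) * dr x * (tt x ^ Suc m * tt x ^ m)"
      by (simp add: dG_def algebra_simps)
    also have "\<dots> = real (Suc m) * X x"
      using e unfolding p1 p2 fdt G_def X_def by (simp add: algebra_simps)
    finally show "f x * (dd\<phi> (dr x) * ddr x + tt x ^ Suc m * (ddh (G x) * dG x)) = real (Suc m) * X x" .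
  qed
  have reg_up: "\<And>a b. 0 < a \<Longrightarrow> a < b \<Longrightarrow> b \<le> 1 \<Longrightarrow>
      (\<And>x. a < x \<Longrightarrow> x < b \<Longrightarrow> e1 * tt x \<le> dr x) \<Longrightarrow> dr b \<le> dr a \<and> tt a \<le> tt b"
  proof -
    fix a b :: real assume ab: "0 < a" "a < b" "b \<le> 1"
      and hyp: "\<And>x. a < x \<Longrightarrow> x < b \<Longrightarrow> e1 * tt x \<le> dr x"
    have dt_nn: "\<And>x. a < x \<Longrightarrow> x < b \<Longrightarrow> 0 \<le> dt x"
    proof -
      fix x assume x: "a < x" "x < b"
      have x0: "0 < x" "x < 1" using x ab by auto
      have dfr: "\<mu>0 \<le> df (r x)" using df_bounds[of "r x"] r_pos[of x] x0 by auto
      have dfx: "df x \<le> \<mu>1" using df_bounds[of x] x0 by auto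
      have T: "0 < tt x" using tt_pos x0 by auto
      have "df x * tt x \<le> \<mu>1 * tt x" using dfx T by (simp add: mult_right_mono)
      also have "\<dots> \<le> \<mu>0 * e1 * tt x" using e1_mu T by (simp add: mult_right_mono)
      also have "\<dots> \<le> \<mu>0 * dr x" using hyp[OF x] mu0_pos by (simp add: mult.assoc mult_left_mono)
      also have "\<dots> \<le> df (r x) * dr x" using dfr dr_pos[of x] x0 by (simp add: mult_right_mono)
      finally show "0 \<le> dt x" using fpos[of x] x0 by (simp add: dt_def)
    qed
    have tt_mono: "\<And>y z. a \<le> y \<Longrightarrow> y \<le> z \<Longrightarrow> z \<le> b \<Longrightarrow> tt y \<le> tt z"
    proof -
      fix y z assume yz: "a \<le> y" "y \<le> z" "z \<le> b"
      show "tt y \<le> tt z"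
      proof (rule DERIV_nonneg_imp_increasing_open[OF yz(2)])
        fix x assume x: "y < x" "x < z"
        have "a < x" "x < b" "0 < x" "x < 1" using x yz ab by auto
        then show "\<exists>d. (tt has_real_derivative d) (at x) \<and> 0 \<le> d" using tt_at dt_nn by blast
      next
        show "continuous_on {y..z} tt" by (rule continuous_on_subset[OF tt_cont]) (use yz ab in auto)
      qed
    qed
    have "dr b \<le> dr a"
    proof (rule ccontr)
      assume "\<not> dr b \<le> dr a"
      then have lt: "dr a < dr b" by simp
      define c where "c = tt a ^ Suc m"
      have c0: "0 < c" using tt_pos[of a] ab by (simp add: c_def)
      have Kdec: "dr b \<le> dr a \<or> d\<phi> (dr b) + c * dh (G b) \<le> d\<phi> (dr a) + c * dh (G a)"
      proof -
        have "d\<phi> (dr a) + c * dh (G a) \<ge> d\<phi> (dr b) + c * dh (G b)"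
        proof (rule DERIV_nonpos_imp_decreasing_open[of a b])
          show "a \<le> b" using ab by simp
          show "continuous_on {a..b} (\<lambda>y. d\<phi> (dr y) + c * dh (G y))" using K_cont ab by simp
        next
          fix x assume x: "a < x" "x < b"
          have x0: "0 < x" "x < 1" "x \<le> 1" using x ab by auto
          define Qd where "Qd = dd\<phi> (dr x) * ddr x"
          define Hd where "Hd = ddh (G x) * dG x"
          have o1: "f x * (Qd + tt x ^ Suc m * Hd) \<le> 0"
            using ode[OF x0(1,2)] Xup[OF x0(1,3) hyp[OF x]] by (simp add: Qd_def Hd_def mult_nonneg_nonpos)
          have o: "Qd + tt x ^ Suc m * Hd \<le> 0" using o1 fpos[OF x0(1)] by (simp add: mult_le_0_iff)
          have cle: "c \<le> tt x ^ Suc m"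
            unfolding c_def by (rule power_mono) (use tt_mono[of a x] tt_pos[of a] ab x in auto)
          have "Qd + c * Hd \<le> 0"
          proof (cases "0 \<le> Hd")
            case True
            then have "c * Hd \<le> tt x ^ Suc m * Hd" using cle by (simp add: mult_right_mono)
            then show ?thesis using o by simp
          next
            case False
            have "0 \<le> ddh (G x)" using ddh_nn G_pos x0 by simp
            then have dGn: "dG x < 0" using False unfolding Hd_def by (metis mult_nonneg_nonneg not_le)
            have "0 \<le> dr x * (real (Suc m) * tt x ^ m * dt x)"
              using dr_pos[of x] tt_pos[of x] dt_nn[OF x] x0 by simp
            then have "ddr x * tt x ^ Suc m < 0" using dGn by (simp add: dG_def)
            then have "ddr x < 0" using tt_pos[of x] x0 by (simp add: mult_less_0_iff)
            then have "Qd \<le> 0" using ddphi_nn[of "dr x"] dr_pos[of x] x0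
              by (simp add: Qd_def mult_nonneg_nonpos)
            moreover have "c * Hd \<le> 0" using c0 False by (simp add: mult_nonneg_nonpos)
            ultimately show ?thesis by simp
          qed
          then show "\<exists>y. ((\<lambda>y. d\<phi> (dr y) + c * dh (G y)) has_real_derivative y) (at x) \<and> y \<le> 0"
            using K_at[OF x0(1,2), of c] by (auto simp: Qd_def Hd_def)
        qed
        then show ?thesis by simp
      qed
      have Ga: "G a < G b"
      proof -
        have "G a = dr a * tt a ^ Suc m" by (simp add: G_def)
        also have "\<dots> < dr b * tt a ^ Suc m" using lt tt_pos[of a] ab by simp
        also have "\<dots> \<le> dr b * tt b ^ Suc m"
        proof -
          have "tt a ^ Suc m \<le> tt b ^ Suc m"
            by (rule power_mono) (use tt_mono[of a b] tt_pos[of a] ab in auto)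
          then show ?thesis by (rule mult_left_mono) (use dr_pos[of b] ab in auto)
        qed
        finally show ?thesis by (simp add: G_def)
      qed
      have "dh (G a) < dh (G b)" using dh_strict[OF G_pos Ga] ab by simp
      moreover have "d\<phi> (dr a) \<le> d\<phi> (dr b)" using dphi_mono[of "dr a" "dr b"] dr_pos[of a] lt ab by simp
      ultimately have "d\<phi> (dr a) + c * dh (G a) < d\<phi> (dr b) + c * dh (G b)" using c0 by (smt (verit) mult_strict_left_mono)
      then show False using Kdec lt by simp
    qed
    then show "dr b \<le> dr a \<and> tt a \<le> tt b" using tt_mono[of a b] ab by simp
  qed
  have reg_low: "\<And>a b. 0 < a \<Longrightarrow> a < b \<Longrightarrow> b \<le> 1 \<Longrightarrow>
      (\<And>x. a < x \<Longrightarrow> x < b \<Longrightarrow> dr x \<le> e0 * tt x) \<Longrightarrow> dr a \<le> dr b \<and> tt b \<le> tt a"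
  proof -
    fix a b :: real assume ab: "0 < a" "a < b" "b \<le> 1"
      and hyp: "\<And>x. a < x \<Longrightarrow> x < b \<Longrightarrow> dr x \<le> e0 * tt x"
    have dt_np: "\<And>x. a < x \<Longrightarrow> x < b \<Longrightarrow> dt x \<le> 0"
    proof -
      fix x assume x: "a < x" "x < b"
      have x0: "0 < x" "x < 1" using x ab by auto
      have dfr: "df (r x) \<le> \<mu>1" using df_bounds[of "r x"] r_pos[of x] x0 by auto
      have dfx: "\<mu>0 \<le> df x" using df_bounds[of x] x0 by auto
      have T: "0 < tt x" using tt_pos x0 by auto
      have "df (r x) * dr x \<le> \<mu>1 * dr x" using dfr dr_pos[of x] x0 by (simp add: mult_right_mono)
      also have "\<dots> \<le> \<mu>1 * (e0 * tt x)" using hyp[OF x] mu1_pos by (simp add: mult_left_mono)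
      also have "\<dots> = (\<mu>1 * e0) * tt x" by simp
      also have "\<dots> \<le> \<mu>0 * tt x" using e0_mu T by (simp add: mult_right_mono)
      also have "\<dots> \<le> df x * tt x" using dfx T by (simp add: mult_right_mono)
      finally show "dt x \<le> 0" using fpos[of x] x0 by (simp add: dt_def divide_nonpos_pos)
    qed
    have tt_anti: "\<And>y z. a \<le> y \<Longrightarrow> y \<le> z \<Longrightarrow> z \<le> b \<Longrightarrow> tt z \<le> tt y"
    proof -
      fix y z assume yz: "a \<le> y" "y \<le> z" "z \<le> b"
      show "tt z \<le> tt y"
      proof (rule DERIV_nonpos_imp_decreasing_open[OF yz(2)])
        fix x assume x: "y < x" "x < z"
        have "a < x" "x < b" "0 < x" "x < 1" using x yz ab by auto
        then show "\<exists>d. (tt has_real_derivative d) (at x) \<and> d \<le> 0" using tt_at dt_np by blast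
      next
        show "continuous_on {y..z} tt" by (rule continuous_on_subset[OF tt_cont]) (use yz ab in auto)
      qed
    qed
    have "dr a \<le> dr b"
    proof (rule ccontr)
      assume "\<not> dr a \<le> dr b"
      then have lt: "dr b < dr a" by simp
      define c where "c = tt b ^ Suc m"
      have c0: "0 < c" using tt_pos[of b] ab by (simp add: c_def)
      have Kinc: "d\<phi> (dr a) + c * dh (G a) \<le> d\<phi> (dr b) + c * dh (G b)"
      proof (rule DERIV_nonneg_imp_increasing_open[of a b])
        show "a \<le> b" using ab by simp
        show "continuous_on {a..b} (\<lambda>y. d\<phi> (dr y) + c * dh (G y))" using K_cont ab by simp
      next
        fix x assume x: "a < x" "x < b"
        have x0: "0 < x" "x < 1" "x \<le> 1" using x ab by auto
        define Qd where "Qd = dd\<phi> (dr x) * ddr x"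
        define Hd where "Hd = ddh (G x) * dG x"
        have o1: "0 \<le> f x * (Qd + tt x ^ Suc m * Hd)"
          using ode[OF x0(1,2)] Xlow[OF x0(1,3) hyp[OF x]] by (simp add: Qd_def Hd_def)
        have o: "0 \<le> Qd + tt x ^ Suc m * Hd" using o1 fpos[OF x0(1)] by (simp add: zero_le_mult_iff)
        have cle: "c \<le> tt x ^ Suc m"
          unfolding c_def by (rule power_mono) (use tt_anti[of x b] tt_pos[of b] ab x in auto)
        have "0 \<le> Qd + c * Hd"
        proof (cases "Hd \<le> 0")
          case True
          then have "tt x ^ Suc m * Hd \<le> c * Hd" using cle by (simp add: mult_right_mono_neg)
          then show ?thesis using o by simp
        next
          case False
          have "0 \<le> ddh (G x)" using ddh_nn G_pos x0 by simp
          then have dGp: "dG x > 0" using False unfolding Hd_def by (metis mult_nonneg_nonpos not_le)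
          have "dr x * (real (Suc m) * tt x ^ m * dt x) \<le> 0"
          proof -
            have "0 \<le> real (Suc m) * tt x ^ m" using tt_pos[of x] x0 by simp
            then have "real (Suc m) * tt x ^ m * dt x \<le> 0" using dt_np[OF x] by (simp add: mult_nonneg_nonpos)
            then show ?thesis using dr_pos[of x] x0 by (simp add: mult_nonneg_nonpos)
          qed
          then have dd: "0 < ddr x * tt x ^ Suc m" using dGp by (simp add: dG_def)
          have tp: "0 < tt x ^ Suc m" using tt_pos[of x] x0 by simp
          have "0 < ddr x"
          proof (rule ccontr)
            assume "\<not> 0 < ddr x"
            then have "ddr x * tt x ^ Suc m \<le> 0" using tp by (simp add: mult_nonpos_nonneg)
            then show False using dd by simp
          qed
          then have "0 \<le> Qd" using ddphi_nn[of "dr x"] dr_pos[of x] x0 by (simp add: Qd_def)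
          moreover have "0 \<le> c * Hd" using c0 False by simp
          ultimately show ?thesis by simp
        qed
        then show "\<exists>y. ((\<lambda>y. d\<phi> (dr y) + c * dh (G y)) has_real_derivative y) (at x) \<and> 0 \<le> y"
          using K_at[OF x0(1,2), of c] by (auto simp: Qd_def Hd_def)
      qed
      have Gb: "G b < G a"
      proof -
        have "G b = dr b * tt b ^ Suc m" by (simp add: G_def)
        also have "\<dots> < dr a * tt b ^ Suc m" using lt tt_pos[of b] ab by simp
        also have "\<dots> \<le> dr a * tt a ^ Suc m"
        proof -
          have "tt b ^ Suc m \<le> tt a ^ Suc m"
            by (rule power_mono) (use tt_anti[of a b] tt_pos[of b] ab in auto)
          then show ?thesis by (rule mult_left_mono) (use dr_pos[of a] ab in auto)
        qed
        finally show ?thesis by (simp add: G_def)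
      qed
      have "dh (G b) < dh (G a)" using dh_strict[OF G_pos Gb] ab by simp
      moreover have "d\<phi> (dr b) \<le> d\<phi> (dr a)" using dphi_mono[of "dr b" "dr a"] dr_pos[of b] lt ab by simp
      ultimately have "d\<phi> (dr b) + c * dh (G b) < d\<phi> (dr a) + c * dh (G a)"
        using c0 by (smt (verit) mult_strict_left_mono)
      then show False using Kinc by simp
    qed
    then show "dr a \<le> dr b \<and> tt b \<le> tt a" using tt_anti[of a b] ab by simp
  qed
  have e1_nn: "0 \<le> e1" using e1_ge by simp
  have upper: "\<And>\<rho>. 0 < \<rho> \<Longrightarrow> \<rho> \<le> 1 \<Longrightarrow> dr \<rho> \<le> e1 * tt \<rho>"
  proof (rule ccontr)
    fix \<rho>0 :: real assume r0: "0 < \<rho>0" "\<rho>0 \<le> 1" and nc: "\<not> dr \<rho>0 \<le> e1 * tt \<rho>0"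
    show False
    proof (cases "\<exists>x0. 0 < x0 \<and> x0 < \<rho>0 \<and> dr x0 \<le> e1 * tt x0")
      case True
      then obtain x0 where x0: "0 < x0" "x0 < \<rho>0" "dr x0 \<le> e1 * tt x0" by blast
      define T where "T = {x \<in> {x0..\<rho>0}. dr x - e1 * tt x \<le> 0}"
      have cl: "closed T" unfolding T_def
      proof (rule continuous_on_closed_Collect_le)
        have 1: "continuous_on {x0..\<rho>0} dr" by (rule continuous_on_subset[OF dr_cont]) (use x0 r0 in auto)
        have 2: "continuous_on {x0..\<rho>0} tt" by (rule continuous_on_subset[OF tt_cont]) (use x0 r0 in auto)
        show "continuous_on {x0..\<rho>0} (\<lambda>x. dr x - e1 * tt x)" by (intro continuous_intros 1 2)
      qed auto
      have "compact T"
      proof -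
        have "T = {x0..\<rho>0} \<inter> T" by (auto simp: T_def)
        then show ?thesis using compact_Int_closed[OF compact_Icc cl] by metis
      qed
      moreover have "x0 \<in> T" using x0 by (simp add: T_def)
      then have "T \<noteq> {}" by blast
      ultimately obtain \<sigma> where sg: "\<sigma> \<in> T" "\<And>t. t \<in> T \<Longrightarrow> t \<le> \<sigma>"
        using compact_attains_sup by metis
      have sg1: "x0 \<le> \<sigma>" "\<sigma> \<le> \<rho>0" "dr \<sigma> \<le> e1 * tt \<sigma>" using sg(1) by (auto simp: T_def)
      have sg2: "\<sigma> < \<rho>0" using sg1 nc by (metis order_le_less)
      have hyp: "\<And>x. \<sigma> < x \<Longrightarrow> x < \<rho>0 \<Longrightarrow> e1 * tt x \<le> dr x"
      proof -
        fix x assume x: "\<sigma> < x" "x < \<rho>0"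
        show "e1 * tt x \<le> dr x"
        proof (rule ccontr)
          assume "\<not> e1 * tt x \<le> dr x"
          then have "x \<in> T" using x sg1 by (auto simp: T_def)
          then show False using sg(2)[of x] x by simp
        qed
      qed
      have R: "dr \<rho>0 \<le> dr \<sigma> \<and> tt \<sigma> \<le> tt \<rho>0"
        using reg_up[OF _ sg2 r0(2) hyp] sg1 x0 by simp
      have "dr \<rho>0 \<le> e1 * tt \<rho>0"
        using R sg1 e1_nn by (meson mult_left_mono order_trans)
      then show False using nc by simp
    next
      case False
      then have hyp: "\<And>x. 0 < x \<Longrightarrow> x < \<rho>0 \<Longrightarrow> e1 * tt x \<le> dr x" by force
      have mon: "\<And>\<epsilon>. 0 < \<epsilon> \<Longrightarrow> \<epsilon> < \<rho>0 \<Longrightarrow> r \<epsilon> - dr \<rho>0 * \<epsilon> \<le> r \<rho>0 - dr \<rho>0 * \<rho>0"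
      proof -
        fix \<epsilon> :: real assume e: "0 < \<epsilon>" "\<epsilon> < \<rho>0"
        show "r \<epsilon> - dr \<rho>0 * \<epsilon> \<le> r \<rho>0 - dr \<rho>0 * \<rho>0"
        proof (rule DERIV_nonneg_imp_increasing_open[of \<epsilon> \<rho>0 "\<lambda>x. r x - dr \<rho>0 * x"])
          show "\<epsilon> \<le> \<rho>0" using e by simp
        next
          fix x assume x: "\<epsilon> < x" "x < \<rho>0"
          have x0: "0 < x" "x < 1" using x e r0 by auto
          have "((\<lambda>x. r x - dr \<rho>0 * x) has_real_derivative dr x - dr \<rho>0 * 1) (at x)"
            by (intro DERIV_diff DERIV_cmult r_at[OF x0] DERIV_ident)
          moreover have "dr \<rho>0 \<le> dr x"
            using reg_up[OF x0(1) x(2) r0(2)] hyp x0 by force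
          ultimately show "\<exists>y. ((\<lambda>x. r x - dr \<rho>0 * x) has_real_derivative y) (at x) \<and> 0 \<le> y" by force
        next
          have "continuous_on {\<epsilon>..\<rho>0} r" by (rule continuous_on_subset[OF r_cont]) (use e r0 in auto)
          then show "continuous_on {\<epsilon>..\<rho>0} (\<lambda>x. r x - dr \<rho>0 * x)" by (intro continuous_intros)
        qed
      qed
      have lim: "((\<lambda>\<epsilon>. r \<epsilon> - dr \<rho>0 * \<epsilon>) \<longlongrightarrow> 0 - dr \<rho>0 * 0) (at_right 0)"
        by (intro tendsto_intros r_regular)
      have ev: "eventually (\<lambda>\<epsilon>. r \<epsilon> - dr \<rho>0 * \<epsilon> \<le> r \<rho>0 - dr \<rho>0 * \<rho>0) (at_right 0)"
        unfolding eventually_at_right_field by (rule exI[of _ \<rho>0]) (use r0 mon in auto)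
      have "0 - dr \<rho>0 * 0 \<le> r \<rho>0 - dr \<rho>0 * \<rho>0" by (rule tendsto_upperbound[OF lim ev]) simp
      then have rr: "dr \<rho>0 * \<rho>0 \<le> r \<rho>0" by simp
      have fr: "\<mu>0 * r \<rho>0 \<le> f (r \<rho>0)" using f_bounds[of "r \<rho>0"] r_pos[OF r0] by simp
      have fx: "f \<rho>0 \<le> \<mu>1 * \<rho>0" using f_bounds[of \<rho>0] r0 by simp
      have "\<mu>0 * (dr \<rho>0 * f \<rho>0) \<le> \<mu>0 * (dr \<rho>0 * (\<mu>1 * \<rho>0))"
        using fx dr_pos[of \<rho>0] r0 mu0_pos by (simp add: mult_left_mono)
      also have "\<dots> = \<mu>1 * (dr \<rho>0 * \<rho>0) * \<mu>0" by simp
      also have "\<dots> \<le> \<mu>1 * r \<rho>0 * \<mu>0" using rr mu1_pos mu0_pos by simp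
      also have "\<dots> \<le> \<mu>1 * f (r \<rho>0)" using fr mu1_pos by (simp add: mult.commute mult.left_commute)
      finally have "\<mu>0 * (dr \<rho>0 * f \<rho>0) \<le> \<mu>1 * f (r \<rho>0)" .
      then have "dr \<rho>0 \<le> (\<mu>1 / \<mu>0) * tt \<rho>0"
        using mu0_pos fpos[of \<rho>0] r0 by (simp add: tt_eq field_simps)
      also have "\<dots> \<le> e1 * tt \<rho>0" using mult_right_mono[OF e1_ge(1), of "tt \<rho>0"] tt_pos[OF r0] by simp
      finally show False using nc by simp
    qed
  qed
  have e0_nn: "0 \<le> e0" using e0_le by simp
  have lower: "\<And>\<rho>. 0 < \<rho> \<Longrightarrow> \<rho> \<le> 1 \<Longrightarrow> e0 * tt \<rho> \<le> dr \<rho>"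
  proof (rule ccontr)
    fix \<rho>0 :: real assume r0: "0 < \<rho>0" "\<rho>0 \<le> 1" and nc: "\<not> e0 * tt \<rho>0 \<le> dr \<rho>0"
    show False
    proof (cases "\<exists>x0. 0 < x0 \<and> x0 < \<rho>0 \<and> e0 * tt x0 \<le> dr x0")
      case True
      then obtain x0 where x0: "0 < x0" "x0 < \<rho>0" "e0 * tt x0 \<le> dr x0" by blast
      define T where "T = {x \<in> {x0..\<rho>0}. e0 * tt x - dr x \<le> 0}"
      have cl: "closed T" unfolding T_def
      proof (rule continuous_on_closed_Collect_le)
        have 1: "continuous_on {x0..\<rho>0} dr" by (rule continuous_on_subset[OF dr_cont]) (use x0 r0 in auto)
        have 2: "continuous_on {x0..\<rho>0} tt" by (rule continuous_on_subset[OF tt_cont]) (use x0 r0 in auto)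
        show "continuous_on {x0..\<rho>0} (\<lambda>x. e0 * tt x - dr x)" by (intro continuous_intros 1 2)
      qed auto
      have "compact T"
      proof -
        have "T = {x0..\<rho>0} \<inter> T" by (auto simp: T_def)
        then show ?thesis using compact_Int_closed[OF compact_Icc cl] by metis
      qed
      moreover have "x0 \<in> T" using x0 by (simp add: T_def)
      then have "T \<noteq> {}" by blast
      ultimately obtain \<sigma> where sg: "\<sigma> \<in> T" "\<And>t. t \<in> T \<Longrightarrow> t \<le> \<sigma>"
        using compact_attains_sup by metis
      have sg1: "x0 \<le> \<sigma>" "\<sigma> \<le> \<rho>0" "e0 * tt \<sigma> \<le> dr \<sigma>" using sg(1) by (auto simp: T_def)
      have sg2: "\<sigma> < \<rho>0" using sg1 nc by (metis order_le_less)
      have hyp: "\<And>x. \<sigma> < x \<Longrightarrow> x < \<rho>0 \<Longrightarrow> dr x \<le> e0 * tt x"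
      proof -
        fix x assume x: "\<sigma> < x" "x < \<rho>0"
        show "dr x \<le> e0 * tt x"
        proof (rule ccontr)
          assume "\<not> dr x \<le> e0 * tt x"
          then have "x \<in> T" using x sg1 by (auto simp: T_def)
          then show False using sg(2)[of x] x by simp
        qed
      qed
      have R: "dr \<sigma> \<le> dr \<rho>0 \<and> tt \<rho>0 \<le> tt \<sigma>"
        using reg_low[OF _ sg2 r0(2) hyp] sg1 x0 by simp
      have "e0 * tt \<rho>0 \<le> dr \<rho>0"
        using R sg1 e0_nn by (meson mult_left_mono order_trans)
      then show False using nc by simp
    next
      case False
      then have hyp: "\<And>x. 0 < x \<Longrightarrow> x < \<rho>0 \<Longrightarrow> dr x \<le> e0 * tt x" by force
      have mon: "\<And>\<epsilon>. 0 < \<epsilon> \<Longrightarrow> \<epsilon> < \<rho>0 \<Longrightarrow> r \<rho>0 - dr \<rho>0 * \<rho>0 \<le> r \<epsilon> - dr \<rho>0 * \<epsilon>"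
      proof -
        fix \<epsilon> :: real assume e: "0 < \<epsilon>" "\<epsilon> < \<rho>0"
        show "r \<rho>0 - dr \<rho>0 * \<rho>0 \<le> r \<epsilon> - dr \<rho>0 * \<epsilon>"
        proof (rule DERIV_nonpos_imp_decreasing_open[of \<epsilon> \<rho>0 "\<lambda>x. r x - dr \<rho>0 * x"])
          show "\<epsilon> \<le> \<rho>0" using e by simp
        next
          fix x assume x: "\<epsilon> < x" "x < \<rho>0"
          have x0: "0 < x" "x < 1" using x e r0 by auto
          have "((\<lambda>x. r x - dr \<rho>0 * x) has_real_derivative dr x - dr \<rho>0 * 1) (at x)"
            by (intro DERIV_diff DERIV_cmult r_at[OF x0] DERIV_ident)
          moreover have "dr x \<le> dr \<rho>0"
            using reg_low[OF x0(1) x(2) r0(2)] hyp x0 by force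
          ultimately show "\<exists>y. ((\<lambda>x. r x - dr \<rho>0 * x) has_real_derivative y) (at x) \<and> y \<le> 0" by force
        next
          have "continuous_on {\<epsilon>..\<rho>0} r" by (rule continuous_on_subset[OF r_cont]) (use e r0 in auto)
          then show "continuous_on {\<epsilon>..\<rho>0} (\<lambda>x. r x - dr \<rho>0 * x)" by (intro continuous_intros)
        qed
      qed
      have lim: "((\<lambda>\<epsilon>. r \<epsilon> - dr \<rho>0 * \<epsilon>) \<longlongrightarrow> 0 - dr \<rho>0 * 0) (at_right 0)"
        by (intro tendsto_intros r_regular)
      have ev: "eventually (\<lambda>\<epsilon>. r \<rho>0 - dr \<rho>0 * \<rho>0 \<le> r \<epsilon> - dr \<rho>0 * \<epsilon>) (at_right 0)"
        unfolding eventually_at_right_field by (rule exI[of _ \<rho>0]) (use r0 mon in auto)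
      have "r \<rho>0 - dr \<rho>0 * \<rho>0 \<le> 0 - dr \<rho>0 * 0" by (rule tendsto_lowerbound[OF lim ev]) simp
      then have rr: "r \<rho>0 \<le> dr \<rho>0 * \<rho>0" by simp
      have fr: "f (r \<rho>0) \<le> \<mu>1 * r \<rho>0" using f_bounds[of "r \<rho>0"] r_pos[OF r0] by simp
      have fx: "\<mu>0 * \<rho>0 \<le> f \<rho>0" using f_bounds[of \<rho>0] r0 by simp
      have "\<mu>0 * f (r \<rho>0) \<le> \<mu>0 * (\<mu>1 * r \<rho>0)" using fr mu0_pos by simp
      also have "\<dots> \<le> \<mu>0 * (\<mu>1 * (dr \<rho>0 * \<rho>0))" using rr mu0_pos mu1_pos by simp
      also have "\<dots> = \<mu>1 * dr \<rho>0 * (\<mu>0 * \<rho>0)" by simp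
      also have "\<dots> \<le> \<mu>1 * dr \<rho>0 * f \<rho>0"
        using fx mu1_pos dr_pos[of \<rho>0] r0 by (simp add: mult_left_mono)
      finally have k: "\<mu>0 * f (r \<rho>0) \<le> \<mu>1 * dr \<rho>0 * f \<rho>0" .
      have "e0 * tt \<rho>0 \<le> (\<mu>0 / \<mu>1) * tt \<rho>0"
        using mult_right_mono[OF e0_le(1), of "tt \<rho>0"] tt_pos[OF r0] by simp
      also have "\<dots> \<le> dr \<rho>0"
        using k mu1_pos fpos[of \<rho>0] r0 by (simp add: tt_eq field_simps)
      finally show False using nc by simp
    qed
  qed
  show ?thesis
    unfolding inv0 inv1 tt_def[symmetric] e0_def[symmetric] e1_def[symmetric]
    using upper lower by simp
qed

end
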